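(* Fix $r\ge0$, $n\ge0$. Let $\pi\in B_n$ be an involution with $b$ barred fixed points and $d$ barred two-cycles, and let $D=P_d^r(\pi)$. Then \[ ev(D)=d,\qquad ov(D)=b+d. \]
   Context: Partitions are identified with Young diagrams in English notation: cell $(k,l)$ lies in row $k$ (from the top) and column $l$ (from the left). A domino is a set of two cells sharing an edge (vertical if in one column). $\delta_r=(r,r-1,\dots,1)$; $\mathcal P_r(n)$ is the set of partitions with 2-core $\delta_r$ and size $|\delta_r|+2n$. A standard domino tableau (SDT) of shape $\lambda\in\mathcal P_r(n)$ is a chain $\delta_r=\lambda^0\subset\cdots\subset\lambda^n=\lambda$ with each $\lambda^k/\lambda^{k-1}$ a domino. $ov(D)$ (resp. $ev(D)$) is the number of vertical dominoes of $D$ in odd-numbered (resp. even-numbered) columns. $B_n$ is the set of words $\pi=\pi_1\cdots\pi_n$ in letters $\{1,\dots,n,\bar1,\dots,\bar n\}$ in which each $k\in[n]$ occurs exactly once, barred or unbarred. $\pi$ is an involution if for each $k$: $\pi_k=k$ (fixed point), $\pi_k=\bar k$ (barred fixed point), or for some $l\ne k$, $\pi_k=l,\pi_l=k$ (two-cycle) or $\pi_k=\bar l,\pi_l=\bar k$ (barred two-cycle). Growth diagram: $M(i,j)=1$ if $\pi_i=j$, $-1$ if $\pi_i=\bar j$, $0$ otherwise. Partitions $\lambda_{(i,j)}$, $1\le i,j\le n+1$, with $\lambda_{(1,j)}=\lambda_{(i,1)}=\delta_r$; for $i,j\in[n]$, with $\lambda=\lambda_{(i,j)},\mu=\lambda_{(i+1,j)},\nu=\lambda_{(i,j+1)}$,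 $\rho=\lambda_{(i+1,j+1)}$ is: (1) if $M(i,j)=1$ (then $\lambda=\mu=\nu$), $\lambda$ with two cells appended to its first row; (2) if $M(i,j)=-1$ (then $\lambda=\mu=\nu$), $\lambda$ with two cells appended to its first column; (3) if $M(i,j)=0$ and $\lambda=\mu$ or $\lambda=\nu$, the largest of $\lambda,\mu,\nu$; (4) otherwise, with dominoes $\gamma=\nu/\lambda$, $\gamma'=\mu/\lambda$: if disjoint, $\lambda\cup\gamma\cup\gamma'$; if they share exactly the cell $(k,l)$, $\lambda\cup\gamma\cup\gamma'\cup\{(k+1,l+1)\}$; if $\gamma=\gamma'$ vertical in column $l$, $\lambda\cup\gamma$ with two cells appended at the bottom of column $l+1$; if $\gamma=\gamma'$ horizontal in row $k$, $\lambda\cup\gamma$ with two cells appended at the end of row $k+1$. Consecutive partitions in the last row/column differ by one domino. $P_d^r(\pi)$ is the SDT given by the chain $\lambda_{(n+1,1)}\subset\cdots\subset\lambda_{(n+1,n+1)}$. *)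

theory Defs
  imports Main
begin

text \<open>Cells are pairs (row, column), both 1-based (English notation).
  A partition is identified with its Young diagram, a finite set of cells.\<close>

type_synonym cell = "nat \<times> nat"
type_synonym diagram = "cell set"

definition staircase :: "nat \<Rightarrow> diagram" where
  "staircase r = {(k, l). 1 \<le> k \<and> 1 \<le> l \<and> k + l \<le> r + 1}"

definition row_len :: "diagram \<Rightarrow> nat \<Rightarrow> nat" where
  "row_len S k = card {l. (k, l) \<in> S}"

definition col_len :: "diagram \<Rightarrow> nat \<Rightarrow> nat" where
  "col_len S l = card {k. (k, l) \<in> S}"

definition vertical_domino :: "cell set \<Rightarrow> bool" where
  "vertical_domino D \<longleftrightarrow> (\<exists>k l. D = {(k, l), (Suc k, l)})"

definition horizontal_domino :: "cell set \<Rightarrow> bool" where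
  "horizontal_domino D \<longleftrightarrow> (\<exists>k l. D = {(k, l), (k, Suc l)})"

definition vertical_in_col :: "cell set \<Rightarrow> nat \<Rightarrow> bool" where
  "vertical_in_col D l \<longleftrightarrow> (\<exists>k. D = {(k, l), (Suc k, l)})"

definition horizontal_in_row :: "cell set \<Rightarrow> nat \<Rightarrow> bool" where
  "horizontal_in_row D k \<longleftrightarrow> (\<exists>l. D = {(k, l), (k, Suc l)})"

text \<open>Signed words: letter j is encoded by the integer j, letter bar j by -j.
  A word pi_1...pi_n is a function p with p i the i-th letter for i in [n] (0 elsewhere).\<close>

definition signed_perms :: "nat \<Rightarrow> (nat \<Rightarrow> int) set" where
  "signed_perms n = {p. (\<forall>i. i \<notin> {1..n} \<longrightarrow> p i = 0)
      \<and> bij_betw (\<lambda>i. nat \<bar>p i\<bar>) {1..n} {1..n}}"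

definition is_involution :: "nat \<Rightarrow> (nat \<Rightarrow> int) \<Rightarrow> bool" where
  "is_involution n p \<longleftrightarrow> (\<forall>k\<in>{1..n}.
      p k = int k \<or> p k = - int k \<or>
      (\<exists>l\<in>{1..n}. l \<noteq> k \<and>
          ((p k = int l \<and> p l = int k) \<or> (p k = - int l \<and> p l = - int k))))"

definition barred_fixed_points :: "nat \<Rightarrow> (nat \<Rightarrow> int) \<Rightarrow> nat" where
  "barred_fixed_points n p = card {k\<in>{1..n}. p k = - int k}"

definition barred_two_cycles :: "nat \<Rightarrow> (nat \<Rightarrow> int) \<Rightarrow> nat" where
  "barred_two_cycles n p = card {{k, l} | k l. k \<in> {1..n} \<and> l \<in> {1..n} \<and> k \<noteq> l
      \<and> p k = - int l \<and> p l = - int k}"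

definition Mentry :: "(nat \<Rightarrow> int) \<Rightarrow> nat \<Rightarrow> nat \<Rightarrow> int" where
  "Mentry p i j = (if p i = int j then 1 else if p i = - int j then -1 else 0)"

text \<open>Local rule: given M(i,j)=m and lam = lambda(i,j), mu = lambda(i+1,j),
  nu = lambda(i,j+1), compute rho = lambda(i+1,j+1).\<close>
definition local_rule :: "int \<Rightarrow> diagram \<Rightarrow> diagram \<Rightarrow> diagram \<Rightarrow> diagram" where
  "local_rule m lam mu nu =
    (if m = 1 then lam \<union> {(1, row_len lam 1 + 1), (1, row_len lam 1 + 2)}
     else if m = -1 then lam \<union> {(col_len lam 1 + 1, 1), (col_len lam 1 + 2, 1)}
     else if lam = mu \<or> lam = nu then (if lam = mu then nu else mu)
     else (let g = nu - lam; g' = mu - lam in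
       if g \<inter> g' = {} then lam \<union> g \<union> g'
       else if (\<exists>c. g \<inter> g' = {c})
         then (let (k, l) = (THE c. g \<inter> g' = {c}) in lam \<union> g \<union> g' \<union> {(Suc k, Suc l)})
       else if g = g' \<and> vertical_domino g
         then (let l = (THE l. vertical_in_col g l); S = lam \<union> g in
               S \<union> {(col_len S (Suc l) + 1, Suc l), (col_len S (Suc l) + 2, Suc l)})
       else if g = g' \<and> horizontal_domino g
         then (let k = (THE k. horizontal_in_row g k); S = lam \<union> g in
               S \<union> {(Suc k, row_len S (Suc k) + 1), (Suc k, row_len S (Suc k) + 2)})
       else undefined))"

text \<open>grow r p i j = lambda_(i,j) for 1 <= i,j; boundary (i = 1 or j = 1) is delta_r.\<close>
fun grow :: "nat \<Rightarrow> (nat \<Rightarrow> int) \<Rightarrow> nat \<Rightarrow> nat \<Rightarrow> diagram" where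
  "grow r p (Suc (Suc i)) (Suc (Suc j)) =
     local_rule (Mentry p (Suc i) (Suc j))
       (grow r p (Suc i) (Suc j)) (grow r p (Suc (Suc i)) (Suc j)) (grow r p (Suc i) (Suc (Suc j)))"
| "grow r p _ _ = staircase r"

text \<open>The domino tableau P_d^r(pi), as the chain of partitions
  lambda_(n+1,1), ..., lambda_(n+1,n+1).\<close>
definition Pd :: "nat \<Rightarrow> nat \<Rightarrow> (nat \<Rightarrow> int) \<Rightarrow> diagram list" where
  "Pd r n p = map (\<lambda>j. grow r p (n + 1) j) [1..<n + 2]"

definition ov :: "diagram list \<Rightarrow> nat" where
  "ov D = card {k. 0 < k \<and> k < length D \<and>
      (\<exists>l. odd l \<and> vertical_in_col (D ! k - D ! (k - 1)) l)}"

definition ev :: "diagram list \<Rightarrow> nat" where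
  "ev D = card {k. 0 < k \<and> k < length D \<and>
      (\<exists>l. even l \<and> vertical_in_col (D ! k - D ! (k - 1)) l)}"

end

theory Submission
  imports Defs
begin


definition part :: "diagram \<Rightarrow> bool" where
  "part S \<longleftrightarrow> finite S \<and> (\<forall>k l. (k, l) \<in> S \<longrightarrow> 1 \<le> k \<and> 1 \<le> l \<and>
      (\<forall>k' l'. 1 \<le> k' \<and> k' \<le> k \<and> 1 \<le> l' \<and> l' \<le> l \<longrightarrow> (k', l') \<in> S))"

definition dstep :: "diagram \<Rightarrow> diagram \<Rightarrow> bool" where
  "dstep X Y \<longleftrightarrow> X \<subseteq> Y \<and> (Y - X = {} \<or> vertical_domino (Y - X) \<or> horizontal_domino (Y - X))"

definition vE :: "diagram \<Rightarrow> diagram \<Rightarrow> int" where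
  "vE X Y = (if \<exists>l. even l \<and> vertical_in_col (Y - X) l then 1 else 0)"
definition vO :: "diagram \<Rightarrow> diagram \<Rightarrow> int" where
  "vO X Y = (if \<exists>l. odd l \<and> vertical_in_col (Y - X) l then 1 else 0)"
definition vt :: "diagram \<Rightarrow> diagram \<Rightarrow> int" where
  "vt X Y = (if vertical_domino (Y - X) then 1 else 0)"

lemma vic_iff: "vertical_in_col {(k, l), (Suc k, l)} l' \<longleftrightarrow> l' = l"
  unfolding vertical_in_col_def by (auto simp: doubleton_eq_iff)

lemma vic_h: "\<not> vertical_in_col {(k, l), (k, Suc l)} l'"
  unfolding vertical_in_col_def by (auto simp: doubleton_eq_iff)

lemma vic_e: "\<not> vertical_in_col {} l'"
  unfolding vertical_in_col_def by auto

lemma vd_h: "\<not> vertical_domino {(k, l), (k, Suc l)}"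
  unfolding vertical_domino_def by (auto simp: doubleton_eq_iff)

lemma hd_v: "\<not> horizontal_domino {(k, l), (Suc k, l)}"
  unfolding horizontal_domino_def by (auto simp: doubleton_eq_iff)

lemma vv_V: "Y - X = {(k, l), (Suc k, l)} \<Longrightarrow>
   vE X Y = (if even l then 1 else 0) \<and> vO X Y = (if odd l then 1 else 0) \<and> vt X Y = 1"
  unfolding vE_def vO_def vt_def by (auto simp: vic_iff vertical_domino_def)

lemma vv_H: "Y - X = {(k, l), (k, Suc l)} \<Longrightarrow> vE X Y = 0 \<and> vO X Y = 0 \<and> vt X Y = 0"
  unfolding vE_def vO_def vt_def using vic_h vd_h by auto

lemma vv_E: assumes h: "Y - X = {}" shows "vE X Y = 0 \<and> vO X Y = 0 \<and> vt X Y = 0"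
proof -
  have "\<not> vertical_domino {}" unfolding vertical_domino_def by auto
  then show ?thesis by (simp add: vE_def vO_def vt_def h vic_e)
qed

lemma vt_sum: "vt X Y = vE X Y + vO X Y"
proof (cases "vertical_domino (Y - X)")
  case True
  then obtain k l where "Y - X = {(k, l), (Suc k, l)}" unfolding vertical_domino_def by auto
  from vv_V[OF this] show ?thesis by auto
next
  case False
  then have "\<not> vertical_in_col (Y - X) l" for l unfolding vertical_domino_def vertical_in_col_def by auto
  then show ?thesis using False unfolding vE_def vO_def vt_def by auto
qed

lemma part_down: "part S \<Longrightarrow> (k, l) \<in> S \<Longrightarrow> 1 \<le> k' \<Longrightarrow> k' \<le> k \<Longrightarrow> 1 \<le> l' \<Longrightarrow> l' \<le> l \<Longrightarrow> (k', l') \<in> S"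
  unfolding part_def by blast

lemma part_pos: "part S \<Longrightarrow> (k, l) \<in> S \<Longrightarrow> 1 \<le> k \<and> 1 \<le> l"
  unfolding part_def by blast

lemma part_fin: "part S \<Longrightarrow> finite S"
  unfolding part_def by blast

lemma part_Un: "part A \<Longrightarrow> part B \<Longrightarrow> part (A \<union> B)"
  unfolding part_def by blast

lemma part_extend:
  assumes "part X" "finite C"
    and "\<And>k l. (k, l) \<in> C \<Longrightarrow> 1 \<le> k \<and> 1 \<le> l \<and>
          (\<forall>k' l'. 1 \<le> k' \<and> k' \<le> k \<and> 1 \<le> l' \<and> l' \<le> l \<longrightarrow> (k', l') \<in> X \<union> C)"
  shows "part (X \<union> C)"
  using assms unfolding part_def by blast

lemma col_char:
  assumes "part S"
  shows "{k. (k, l) \<in> S} = {1..col_len S l}"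
proof -
  let ?T = "{k. (k, l) \<in> S}"
  have fin: "finite ?T"
  proof -
    have "?T \<subseteq> fst ` S" by force
    then show ?thesis using part_fin[OF assms] finite_subset by blast
  qed
  show ?thesis
  proof (cases "?T = {}")
    case True
    then show ?thesis unfolding col_len_def by simp
  next
    case False
    define M where "M = Max ?T"
    have "M \<in> ?T" using Max_in[OF fin False] M_def by simp
    have "?T = {1..M}"
    proof
      show "?T \<subseteq> {1..M}" using Max_ge[OF fin] part_pos[OF assms] M_def by auto
      have "1 \<le> l" using part_pos[OF assms, of M l] \<open>M \<in> ?T\<close> by auto
      then show "{1..M} \<subseteq> ?T" using part_down[OF assms, of M l] \<open>M \<in> ?T\<close> by auto
    qed
    then show ?thesis unfolding col_len_def by simp
  qed
qed

lemma row_char: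
  assumes "part S"
  shows "{l. (k, l) \<in> S} = {1..row_len S k}"
proof -
  let ?T = "{l. (k, l) \<in> S}"
  have fin: "finite ?T"
  proof -
    have "?T \<subseteq> snd ` S" by force
    then show ?thesis using part_fin[OF assms] finite_subset by blast
  qed
  show ?thesis
  proof (cases "?T = {}")
    case True
    then show ?thesis unfolding row_len_def by simp
  next
    case False
    define M where "M = Max ?T"
    have "M \<in> ?T" using Max_in[OF fin False] M_def by simp
    have "?T = {1..M}"
    proof
      show "?T \<subseteq> {1..M}" using Max_ge[OF fin] part_pos[OF assms] M_def by auto
      have "1 \<le> k" using part_pos[OF assms, of k M] \<open>M \<in> ?T\<close> by auto
      then show "{1..M} \<subseteq> ?T" using part_down[OF assms, of k M] \<open>M \<in> ?T\<close> by auto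
    qed
    then show ?thesis unfolding row_len_def by simp
  qed
qed

lemma col_mem: "part S \<Longrightarrow> (k, l) \<in> S \<longleftrightarrow> 1 \<le> k \<and> k \<le> col_len S l"
  using col_char[of S l] by (metis (no_types, lifting) atLeastAtMost_iff mem_Collect_eq)

lemma row_mem: "part S \<Longrightarrow> (k, l) \<in> S \<longleftrightarrow> 1 \<le> l \<and> l \<le> row_len S k"
  using row_char[of S k] by (metis (no_types, lifting) atLeastAtMost_iff mem_Collect_eq)

lemma part_stair: "part (staircase r)"
proof -
  have "staircase r \<subseteq> {1..r} \<times> {1..r}" unfolding staircase_def by auto
  then have "finite (staircase r)" using finite_subset by blast
  then show ?thesis unfolding part_def staircase_def by auto
qed


lemma v_cong: "Y - X = Y' - X' \<Longrightarrow> vE X Y = vE X' Y' \<and> vO X Y = vO X' Y' \<and> vt X Y = vt X' Y'"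
  unfolding vE_def vO_def vt_def by simp

lemma dom_cases: "dstep X Y \<Longrightarrow> Y \<noteq> X \<Longrightarrow>
   \<exists>k l. Y - X = {(k, l), (Suc k, l)} \<or> Y - X = {(k, l), (k, Suc l)}"
  unfolding dstep_def vertical_domino_def horizontal_domino_def by auto

lemma lr_p1: "local_rule 1 lam mu nu = lam \<union> {(1, Suc (row_len lam 1)), (1, Suc (Suc (row_len lam 1)))}"
  by (simp add: local_rule_def)

lemma lr_m1: "local_rule (-1) lam mu nu = lam \<union> {(Suc (col_len lam 1), 1), (Suc (Suc (col_len lam 1)), 1)}"
  by (simp add: local_rule_def)

lemma lr_eq1: "lam = mu \<Longrightarrow> local_rule 0 lam mu nu = nu"
  by (simp add: local_rule_def)

lemma lr_eq2: "lam = nu \<Longrightarrow> local_rule 0 lam mu nu = mu"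
  by (simp add: local_rule_def)

lemma lr_disj: assumes "lam \<noteq> mu" "lam \<noteq> nu" "(nu - lam) \<inter> (mu - lam) = {}" shows
   "local_rule 0 lam mu nu = lam \<union> (nu - lam) \<union> (mu - lam)"
  unfolding local_rule_def Let_def using assms by (simp only: if_False if_True simp_thms zero_neq_one) simp

lemma lr_shared: assumes a: "lam \<noteq> mu" "lam \<noteq> nu" "(nu - lam) \<inter> (mu - lam) = {(k, l)}" shows
   "local_rule 0 lam mu nu = lam \<union> (nu - lam) \<union> (mu - lam) \<union> {(Suc k, Suc l)}"
proof -
  have t: "(THE c. (nu - lam) \<inter> (mu - lam) = {c}) = (k, l)"
    using a(3) by simp
  have e: "\<exists>c. (nu - lam) \<inter> (mu - lam) = {c}" using a(3) by (intro exI)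
  have ne: "(nu - lam) \<inter> (mu - lam) \<noteq> {}" using a(3) by simp
  show ?thesis unfolding local_rule_def Let_def
    by (simp only: if_False if_True simp_thms zero_neq_one zero_neq_neg_one t a(1,2) e ne prod.case)
qed

lemma lr_vert: assumes a: "lam \<noteq> mu" "nu - lam = {(k, l), (Suc k, l)}" "mu - lam = {(k, l), (Suc k, l)}" shows
   "local_rule 0 lam mu nu = lam \<union> {(k, l), (Suc k, l)} \<union>
     {(Suc (col_len (lam \<union> {(k, l), (Suc k, l)}) (Suc l)), Suc l),
      (Suc (Suc (col_len (lam \<union> {(k, l), (Suc k, l)}) (Suc l))), Suc l)}"
proof -
  have ne: "lam \<noteq> nu"
  proof
    assume "lam = nu" then have "nu - lam = {}" by simp
    with a(2) show False by simp
  qed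
  have t: "(THE l'. vertical_in_col {(k, l), (Suc k, l)} l') = l"
    by (rule the_equality) (auto simp: vic_iff)
  have nc: "\<not> (\<exists>c. {(k, l), (Suc k, l)} = {c})" by (auto simp: doubleton_eq_iff)
  have vd: "vertical_domino {(k, l), (Suc k, l)}" unfolding vertical_domino_def by auto
  have ne2: "{(k, l), (Suc k, l)} \<noteq> {}" by auto
  show ?thesis unfolding local_rule_def Let_def
    by (simp only: if_False if_True simp_thms zero_neq_one zero_neq_neg_one a Int_absorb t nc vd ne2 ne) simp
qed
lemma lr_horiz: assumes a: "lam \<noteq> mu" "nu - lam = {(k, l), (k, Suc l)}" "mu - lam = {(k, l), (k, Suc l)}" shows
   "local_rule 0 lam mu nu = lam \<union> {(k, l), (k, Suc l)} \<union>
     {(Suc k, Suc (row_len (lam \<union> {(k, l), (k, Suc l)}) (Suc k))),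
      (Suc k, Suc (Suc (row_len (lam \<union> {(k, l), (k, Suc l)}) (Suc k))))}"
proof -
  have ne: "lam \<noteq> nu"
  proof
    assume "lam = nu" then have "nu - lam = {}" by simp
    with a(2) show False by simp
  qed
  have t: "(THE k'. horizontal_in_row {(k, l), (k, Suc l)} k') = k"
    by (rule the_equality) (auto simp: horizontal_in_row_def doubleton_eq_iff)
  have nc: "\<not> (\<exists>c. {(k, l), (k, Suc l)} = {c})" by (auto simp: doubleton_eq_iff)
  have vd: "\<not> vertical_domino {(k, l), (k, Suc l)}" by (rule vd_h)
  have hd: "horizontal_domino {(k, l), (k, Suc l)}" unfolding horizontal_domino_def by auto
  have ne2: "{(k, l), (k, Suc l)} \<noteq> {}" by auto
  show ?thesis unfolding local_rule_def Let_def
    by (simp only: if_False if_True simp_thms zero_neq_one zero_neq_neg_one a Int_absorb t nc vd hd ne2 ne) simp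
qed

definition good :: "int \<Rightarrow> diagram \<Rightarrow> diagram \<Rightarrow> diagram \<Rightarrow> diagram \<Rightarrow> bool" where
"good m lam mu nu rho \<longleftrightarrow> part rho \<and> dstep mu rho \<and> dstep nu rho \<and>
  vE mu rho - vE lam nu = vO lam mu - vO nu rho + (if m = -1 then 1 else 0) \<and>
  (mu = nu \<longrightarrow> vO lam mu - vE lam mu + vO mu rho - vE mu rho = (if m = -1 then 1 else 0))"

lemma vv_same: "vE X X = 0 \<and> vO X X = 0 \<and> vt X X = 0"
  by (rule vv_E) simp

lemma case_p1: assumes pl: "part lam" shows "good 1 lam lam lam (local_rule 1 lam lam lam)"
proof -
  define a where "a = row_len lam 1"
  let ?H = "{(1::nat, Suc a), (1::nat, Suc (Suc a))}"
  have rho: "local_rule 1 lam lam lam = lam \<union> ?H" by (simp add: lr_p1 a_def)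
  have nin: "(1, Suc a) \<notin> lam" "(1, Suc (Suc a)) \<notin> lam" using row_mem[OF pl] a_def by auto
  have d: "(lam \<union> ?H) - lam = ?H" using nin by auto
  have p: "part (lam \<union> ?H)"
  proof (rule part_extend[OF pl])
    show "finite ?H" by simp
    fix k l assume "(k, l) \<in> ?H"
    then show "1 \<le> k \<and> 1 \<le> l \<and> (\<forall>k' l'. 1 \<le> k' \<and> k' \<le> k \<and> 1 \<le> l' \<and> l' \<le> l \<longrightarrow> (k', l') \<in> lam \<union> ?H)"
      using row_mem[OF pl] a_def by (auto simp: le_Suc_eq)
  qed
  have ds: "dstep lam (lam \<union> ?H)" unfolding dstep_def horizontal_domino_def using d by auto
  show ?thesis unfolding good_def rho using p ds vv_H[OF d] vv_same by simp
qed

lemma case_m1: assumes pl: "part lam" shows "good (-1) lam lam lam (local_rule (-1) lam lam lam)"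
proof -
  define a where "a = col_len lam 1"
  let ?H = "{(Suc a, 1::nat), (Suc (Suc a), 1::nat)}"
  have rho: "local_rule (-1) lam lam lam = lam \<union> ?H" by (simp add: lr_m1 a_def)
  have nin: "(Suc a, 1) \<notin> lam" "(Suc (Suc a), 1) \<notin> lam" using col_mem[OF pl] a_def by auto
  have d: "(lam \<union> ?H) - lam = ?H" using nin by auto
  have p: "part (lam \<union> ?H)"
  proof (rule part_extend[OF pl])
    show "finite ?H" by simp
    fix k l assume "(k, l) \<in> ?H"
    then show "1 \<le> k \<and> 1 \<le> l \<and> (\<forall>k' l'. 1 \<le> k' \<and> k' \<le> k \<and> 1 \<le> l' \<and> l' \<le> l \<longrightarrow> (k', l') \<in> lam \<union> ?H)"
      using col_mem[OF pl] a_def by (auto simp: le_Suc_eq)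
  qed
  have ds: "dstep lam (lam \<union> ?H)" unfolding dstep_def vertical_domino_def using d by auto
  show ?thesis unfolding good_def rho using p ds vv_V[OF d] vv_same by simp
qed

lemma case_eq1: assumes "part nu" "dstep lam nu" shows "good 0 lam lam nu (local_rule 0 lam lam nu)"
  unfolding good_def lr_eq1[OF refl] using assms vv_same by (simp add: dstep_def)

lemma case_eq2: assumes "part mu" "dstep lam mu" "lam \<noteq> mu" shows "good 0 lam mu lam (local_rule 0 lam mu lam)"
  unfolding good_def lr_eq2[OF refl] using assms vv_same by (simp add: dstep_def)


lemma case_disj:
  assumes pm: "part mu" and pn: "part nu" and sm: "dstep lam mu" and sn: "dstep lam nu"
    and ne1: "lam \<noteq> mu" and ne2: "lam \<noteq> nu" and dj: "(nu - lam) \<inter> (mu - lam) = {}"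
  shows "good 0 lam mu nu (local_rule 0 lam mu nu)"
proof -
  have s1: "lam \<subseteq> mu" "lam \<subseteq> nu" using sm sn unfolding dstep_def by auto
  have rho: "local_rule 0 lam mu nu = mu \<union> nu" using lr_disj[OF ne1 ne2 dj] s1 by auto
  have d1: "(mu \<union> nu) - mu = nu - lam" using dj s1 by auto
  have d2: "(mu \<union> nu) - nu = mu - lam" using dj s1 by auto
  have p: "part (mu \<union> nu)" by (rule part_Un[OF pm pn])
  have ds1: "dstep mu (mu \<union> nu)" using sn d1 unfolding dstep_def by auto
  have ds2: "dstep nu (mu \<union> nu)" using sm d2 unfolding dstep_def by auto
  have neq: "mu \<noteq> nu"
  proof
    assume "mu = nu"
    then have "nu - lam = {}" using dj by auto
    then show False using s1 ne2 by auto
  qed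
  show ?thesis unfolding good_def rho using p ds1 ds2 neq v_cong[OF d1] v_cong[OF d2] by simp
qed

lemma case_vh:
  assumes pl: "part lam" and pm: "part mu" and pn: "part nu" and s1: "lam \<subseteq> mu" "lam \<subseteq> nu"
    and g: "nu - lam = {(k, l), (Suc k, l)}" and g': "mu - lam = {(k, l), (k, Suc l)}"
  shows "good 0 lam mu nu (local_rule 0 lam mu nu)"
proof -
  have "mu = lam \<union> (mu - lam)" using s1 by auto
  also have "\<dots> = lam \<union> {(k, l), (k, Suc l)}" by (simp only: g')
  finally have mu_eq: "mu = lam \<union> {(k, l), (k, Suc l)}" .
  have "nu = lam \<union> (nu - lam)" using s1 by auto
  also have "\<dots> = lam \<union> {(k, l), (Suc k, l)}" by (simp only: g)
  finally have nu_eq: "nu = lam \<union> {(k, l), (Suc k, l)}" .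
  have kin: "(k, l) \<in> nu - lam" "(Suc k, l) \<in> nu - lam" "(k, Suc l) \<in> mu - lam"
    by (simp_all only: g g' insert_iff simp_thms)
  have kl: "(k, l) \<in> nu" "(k, l) \<notin> lam" "(Suc k, l) \<in> nu" "(k, Suc l) \<in> mu" "(Suc k, l) \<notin> lam" "(k, Suc l) \<notin> lam"
    using kin by simp_all
  have ne1: "lam \<noteq> mu" using kl by blast
  have ne2: "lam \<noteq> nu" using kl by blast
  have int: "(nu - lam) \<inter> (mu - lam) = {(k, l)}" unfolding g g' by auto
  have pos: "1 \<le> k" "1 \<le> l" using part_pos[OF pn kl(1)] by auto
  have nin: "(Suc k, Suc l) \<notin> lam"
    using part_down[OF pl, of "Suc k" "Suc l" k l] pos kl(2) by auto
  have nin2: "(Suc k, Suc l) \<notin> mu" "(Suc k, Suc l) \<notin> nu" "(Suc k, l) \<notin> mu" "(k, Suc l) \<notin> nu"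
    using kl nin by (simp_all add: mu_eq nu_eq)
  have rho: "local_rule 0 lam mu nu = (mu \<union> nu) \<union> {(Suc k, Suc l)}"
  proof -
    have "lam \<union> (nu - lam) \<union> (mu - lam) = mu \<union> nu" using s1 by auto
    then show ?thesis using lr_shared[OF ne1 ne2 int] by simp
  qed
  have d1: "((mu \<union> nu) \<union> {(Suc k, Suc l)}) - mu = {(Suc k, l), (Suc k, Suc l)}"
    using kl nin by (auto simp: mu_eq nu_eq)
  have d2: "((mu \<union> nu) \<union> {(Suc k, Suc l)}) - nu = {(k, Suc l), (Suc k, Suc l)}"
    using kl nin by (auto simp: mu_eq nu_eq)
  have p: "part ((mu \<union> nu) \<union> {(Suc k, Suc l)})"
  proof (rule part_extend[OF part_Un[OF pm pn]])
    show "finite {(Suc k, Suc l)}" by simp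
    fix a b assume ab: "(a, b) \<in> {(Suc k, Suc l)}"
    have "(k', l') \<in> mu \<union> nu \<union> {(Suc k, Suc l)}"
      if "1 \<le> k'" "k' \<le> Suc k" "1 \<le> l'" "l' \<le> Suc l" for k' l'
    proof (cases "k' \<le> k")
      case True
      then show ?thesis using part_down[OF pm kl(4) that(1) True that(3,4)] by auto
    next
      case False
      then have "k' = Suc k" using that by auto
      then show ?thesis
      proof (cases "l' \<le> l")
        case True
        then show ?thesis using part_down[OF pn kl(3) that(1,2,3) True] by auto
      next
        case False
        then show ?thesis using \<open>k' = Suc k\<close> that by auto
      qed
    qed
    then show "1 \<le> a \<and> 1 \<le> b \<and> (\<forall>k' l'. 1 \<le> k' \<and> k' \<le> a \<and> 1 \<le> l' \<and> l' \<le> b \<longrightarrow> (k', l') \<in> mu \<union> nu \<union> {(Suc k, Suc l)})"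
      using ab by auto
  qed
  have ds1: "dstep mu ((mu \<union> nu) \<union> {(Suc k, Suc l)})"
    unfolding dstep_def horizontal_domino_def using d1 by auto
  have ds2: "dstep nu ((mu \<union> nu) \<union> {(Suc k, Suc l)})"
    unfolding dstep_def vertical_domino_def using d2 by auto
  have neq: "mu \<noteq> nu" using kl nin2 by auto
  show ?thesis unfolding good_def rho using p ds1 ds2 neq vv_H[OF d1] vv_V[OF d2] vv_V[OF g] vv_H[OF g'] by simp
qed


lemma case_hv:
  assumes pl: "part lam" and pm: "part mu" and pn: "part nu" and s1: "lam \<subseteq> mu" "lam \<subseteq> nu"
    and g: "nu - lam = {(k, l), (k, Suc l)}" and g': "mu - lam = {(k, l), (Suc k, l)}"
  shows "good 0 lam mu nu (local_rule 0 lam mu nu)"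
proof -
  have "mu = lam \<union> (mu - lam)" using s1 by auto
  also have "\<dots> = lam \<union> {(k, l), (Suc k, l)}" by (simp only: g')
  finally have mu_eq: "mu = lam \<union> {(k, l), (Suc k, l)}" .
  have "nu = lam \<union> (nu - lam)" using s1 by auto
  also have "\<dots> = lam \<union> {(k, l), (k, Suc l)}" by (simp only: g)
  finally have nu_eq: "nu = lam \<union> {(k, l), (k, Suc l)}" .
  have kin: "(k, l) \<in> mu - lam" "(Suc k, l) \<in> mu - lam" "(k, Suc l) \<in> nu - lam"
    by (simp_all only: g g' insert_iff simp_thms)
  have kl: "(k, l) \<in> mu" "(k, l) \<notin> lam" "(Suc k, l) \<in> mu" "(k, Suc l) \<in> nu" "(Suc k, l) \<notin> lam" "(k, Suc l) \<notin> lam"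
    using kin by simp_all
  have ne1: "lam \<noteq> mu" using kl by blast
  have ne2: "lam \<noteq> nu" using kl by blast
  have int: "(nu - lam) \<inter> (mu - lam) = {(k, l)}" unfolding g g' by auto
  have pos: "1 \<le> k" "1 \<le> l" using part_pos[OF pm kl(1)] by auto
  have nin: "(Suc k, Suc l) \<notin> lam"
    using part_down[OF pl, of "Suc k" "Suc l" k l] pos kl(2) by auto
  have nin2: "(Suc k, Suc l) \<notin> mu" "(Suc k, Suc l) \<notin> nu" "(Suc k, l) \<notin> nu" "(k, Suc l) \<notin> mu"
    using kl nin by (simp_all add: mu_eq nu_eq)
  have rho: "local_rule 0 lam mu nu = (mu \<union> nu) \<union> {(Suc k, Suc l)}"
  proof -
    have "lam \<union> (nu - lam) \<union> (mu - lam) = mu \<union> nu" using s1 by auto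
    then show ?thesis using lr_shared[OF ne1 ne2 int] by simp
  qed
  have d1: "((mu \<union> nu) \<union> {(Suc k, Suc l)}) - mu = {(k, Suc l), (Suc k, Suc l)}"
    using kl nin by (auto simp: mu_eq nu_eq)
  have d2: "((mu \<union> nu) \<union> {(Suc k, Suc l)}) - nu = {(Suc k, l), (Suc k, Suc l)}"
    using kl nin by (auto simp: mu_eq nu_eq)
  have p: "part ((mu \<union> nu) \<union> {(Suc k, Suc l)})"
  proof (rule part_extend[OF part_Un[OF pm pn]])
    show "finite {(Suc k, Suc l)}" by simp
    fix a b assume ab: "(a, b) \<in> {(Suc k, Suc l)}"
    have "(k', l') \<in> mu \<union> nu \<union> {(Suc k, Suc l)}"
      if "1 \<le> k'" "k' \<le> Suc k" "1 \<le> l'" "l' \<le> Suc l" for k' l'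
    proof (cases "k' \<le> k")
      case True
      then show ?thesis using part_down[OF pn kl(4) that(1) True that(3,4)] by auto
    next
      case False
      then have "k' = Suc k" using that by auto
      then show ?thesis
      proof (cases "l' \<le> l")
        case True
        then show ?thesis using part_down[OF pm kl(3) that(1,2,3) True] by auto
      next
        case False
        then show ?thesis using \<open>k' = Suc k\<close> that by auto
      qed
    qed
    then show "1 \<le> a \<and> 1 \<le> b \<and> (\<forall>k' l'. 1 \<le> k' \<and> k' \<le> a \<and> 1 \<le> l' \<and> l' \<le> b \<longrightarrow> (k', l') \<in> mu \<union> nu \<union> {(Suc k, Suc l)})"
      using ab by auto
  qed
  have ds1: "dstep mu ((mu \<union> nu) \<union> {(Suc k, Suc l)})"
    unfolding dstep_def vertical_domino_def using d1 by auto
  have ds2: "dstep nu ((mu \<union> nu) \<union> {(Suc k, Suc l)})"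
    unfolding dstep_def horizontal_domino_def using d2 by auto
  have neq: "mu \<noteq> nu" using kl nin2 by auto
  show ?thesis unfolding good_def rho using p ds1 ds2 neq vv_V[OF d1] vv_H[OF d2] vv_H[OF g] vv_V[OF g'] by simp
qed


lemma case_vert:
  assumes pl: "part lam" and pm: "part mu" and s1: "lam \<subseteq> mu" "lam \<subseteq> nu"
    and g: "nu - lam = {(k, l), (Suc k, l)}" and g': "mu - lam = {(k, l), (Suc k, l)}"
  shows "good 0 lam mu nu (local_rule 0 lam mu nu)"
proof -
  let ?V = "{(k, l), (Suc k, l)}"
  let ?S = "lam \<union> ?V"
  have "mu = lam \<union> (mu - lam)" using s1 by auto
  also have "\<dots> = ?S" by (simp only: g')
  finally have mu_eq: "mu = ?S" .
  have "nu = lam \<union> (nu - lam)" using s1 by auto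
  also have "\<dots> = ?S" by (simp only: g)
  finally have nu_eq: "nu = ?S" .
  have kin: "(k, l) \<in> mu - lam" "(Suc k, l) \<in> mu - lam"
    by (simp_all only: g' insert_iff simp_thms)
  have kl: "(k, l) \<in> mu" "(k, l) \<notin> lam" "(Suc k, l) \<in> mu"
    using kin by simp_all
  have ne1: "lam \<noteq> mu" using kl by blast
  have pS: "part ?S" using pm mu_eq by simp
  have pos: "1 \<le> k" "1 \<le> l" using part_pos[OF pm kl(1)] by auto
  define c where "c = col_len ?S (Suc l)"
  let ?N = "{(Suc c, Suc l), (Suc (Suc c), Suc l)}"
  have rho: "local_rule 0 lam mu nu = ?S \<union> ?N"
    using lr_vert[OF ne1 g g'] c_def by simp
  have clt: "c < k"
  proof (rule ccontr)
    assume "\<not> c < k"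
    then have "(k, Suc l) \<in> ?S" using col_mem[OF pS, of k "Suc l"] pos c_def by simp
    then have "(k, Suc l) \<in> lam" by simp
    then have "(k, l) \<in> lam" using part_down[OF pl, of k "Suc l" k l] pos by simp
    then show False using kl by simp
  qed
  have nin: "(Suc c, Suc l) \<notin> ?S" "(Suc (Suc c), Suc l) \<notin> ?S"
    using col_mem[OF pS, of "Suc c" "Suc l"] col_mem[OF pS, of "Suc (Suc c)" "Suc l"] c_def by simp_all
  have d: "(?S \<union> ?N) - ?S = ?N" using nin by auto
  have p: "part (?S \<union> ?N)"
  proof (rule part_extend[OF pS])
    show "finite ?N" by simp
    fix a b assume ab: "(a, b) \<in> ?N"
    have "(k', l') \<in> ?S \<union> ?N"
      if "1 \<le> k'" "k' \<le> a" "1 \<le> l'" "l' \<le> b" for k' l'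
    proof (cases "l' \<le> l")
      case True
      have "(Suc k, l) \<in> ?S" by simp
      moreover have "k' \<le> Suc k" using that ab clt by auto
      ultimately show ?thesis using part_down[OF pS, of "Suc k" l k' l'] that True by blast
    next
      case False
      then have l': "l' = Suc l" using that ab by auto
      show ?thesis
      proof (cases "k' \<le> c")
        case True
        then show ?thesis using col_mem[OF pS, of k' "Suc l"] c_def l' that by simp
      next
        case False
        then show ?thesis using l' that ab by auto
      qed
    qed
    then show "1 \<le> a \<and> 1 \<le> b \<and> (\<forall>k' l'. 1 \<le> k' \<and> k' \<le> a \<and> 1 \<le> l' \<and> l' \<le> b \<longrightarrow> (k', l') \<in> ?S \<union> ?N)"
      using ab by auto
  qed
  have ds: "dstep ?S (?S \<union> ?N)"
    unfolding dstep_def vertical_domino_def using d by auto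
  show ?thesis unfolding good_def rho mu_eq[symmetric] nu_eq[symmetric]
    using p ds vv_V[OF d[folded mu_eq]] vv_V[OF g] vv_V[OF g'] mu_eq nu_eq by simp
qed

lemma case_horiz:
  assumes pl: "part lam" and pm: "part mu" and s1: "lam \<subseteq> mu" "lam \<subseteq> nu"
    and g: "nu - lam = {(k, l), (k, Suc l)}" and g': "mu - lam = {(k, l), (k, Suc l)}"
  shows "good 0 lam mu nu (local_rule 0 lam mu nu)"
proof -
  let ?V = "{(k, l), (k, Suc l)}"
  let ?S = "lam \<union> ?V"
  have "mu = lam \<union> (mu - lam)" using s1 by auto
  also have "\<dots> = ?S" by (simp only: g')
  finally have mu_eq: "mu = ?S" .
  have "nu = lam \<union> (nu - lam)" using s1 by auto
  also have "\<dots> = ?S" by (simp only: g)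
  finally have nu_eq: "nu = ?S" .
  have kin: "(k, l) \<in> mu - lam" "(k, Suc l) \<in> mu - lam"
    by (simp_all only: g' insert_iff simp_thms)
  have kl: "(k, l) \<in> mu" "(k, l) \<notin> lam" "(k, Suc l) \<in> mu"
    using kin by simp_all
  have ne1: "lam \<noteq> mu" using kl by blast
  have pS: "part ?S" using pm mu_eq by simp
  have pos: "1 \<le> k" "1 \<le> l" using part_pos[OF pm kl(1)] by auto
  define c where "c = row_len ?S (Suc k)"
  let ?N = "{(Suc k, Suc c), (Suc k, Suc (Suc c))}"
  have rho: "local_rule 0 lam mu nu = ?S \<union> ?N"
    using lr_horiz[OF ne1 g g'] c_def by simp
  have clt: "c < l"
  proof (rule ccontr)
    assume "\<not> c < l"
    then have "(Suc k, l) \<in> ?S" using row_mem[OF pS, of "Suc k" l] pos c_def by simp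
    then have "(Suc k, l) \<in> lam" by simp
    then have "(k, l) \<in> lam" using part_down[OF pl, of "Suc k" l k l] pos by simp
    then show False using kl by simp
  qed
  have nin: "(Suc k, Suc c) \<notin> ?S" "(Suc k, Suc (Suc c)) \<notin> ?S"
    using row_mem[OF pS, of "Suc k" "Suc c"] row_mem[OF pS, of "Suc k" "Suc (Suc c)"] c_def by simp_all
  have d: "(?S \<union> ?N) - ?S = ?N" using nin by auto
  have p: "part (?S \<union> ?N)"
  proof (rule part_extend[OF pS])
    show "finite ?N" by simp
    fix a b assume ab: "(a, b) \<in> ?N"
    have "(k', l') \<in> ?S \<union> ?N"
      if "1 \<le> k'" "k' \<le> a" "1 \<le> l'" "l' \<le> b" for k' l'
    proof (cases "k' \<le> k")
      case True
      have "(k, Suc l) \<in> ?S" by simp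
      moreover have "l' \<le> Suc l" using that ab clt by auto
      ultimately show ?thesis using part_down[OF pS, of k "Suc l" k' l'] that True by blast
    next
      case False
      then have k': "k' = Suc k" using that ab by auto
      show ?thesis
      proof (cases "l' \<le> c")
        case True
        then show ?thesis using row_mem[OF pS, of "Suc k" l'] c_def k' that by simp
      next
        case False
        then show ?thesis using k' that ab by auto
      qed
    qed
    then show "1 \<le> a \<and> 1 \<le> b \<and> (\<forall>k' l'. 1 \<le> k' \<and> k' \<le> a \<and> 1 \<le> l' \<and> l' \<le> b \<longrightarrow> (k', l') \<in> ?S \<union> ?N)"
      using ab by auto
  qed
  have ds: "dstep ?S (?S \<union> ?N)"
    unfolding dstep_def horizontal_domino_def using d by auto
  show ?thesis unfolding good_def rho mu_eq[symmetric] nu_eq[symmetric]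
    using p ds vv_H[OF d[folded mu_eq]] vv_H[OF g] vv_H[OF g'] mu_eq nu_eq by simp
qed

lemma inter_cases:
  assumes pm: "part mu" and pn: "part nu"
    and G: "nu - lam = {(k, l), e}" and es: "e = (Suc k, l) \<or> e = (k, Suc l)"
    and G': "mu - lam = {(k', l'), e'}" and es': "e' = (Suc k', l') \<or> e' = (k', Suc l')"
    and ne: "(nu - lam) \<inter> (mu - lam) \<noteq> {}"
  shows "nu - lam = mu - lam \<or> (k' = k \<and> l' = l)"
proof (rule ccontr)
  assume nc: "\<not> (nu - lam = mu - lam \<or> (k' = k \<and> l' = l))"
  obtain x where x: "x \<in> nu - lam" "x \<in> mu - lam" using ne by blast
  have m1: "y \<in> nu - lam \<longleftrightarrow> y = (k, l) \<or> y = e" for y using G by simp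
  have m2: "y \<in> mu - lam \<longleftrightarrow> y = (k', l') \<or> y = e'" for y using G' by simp
  have kl: "(k, l) \<in> nu" "(k', l') \<in> mu" "e \<in> nu" "e' \<in> mu" "(k, l) \<notin> lam" "(k', l') \<notin> lam"
    using m1 m2 by blast+
  have pos: "1 \<le> k" "1 \<le> l" "1 \<le> k'" "1 \<le> l'" using part_pos[OF pn kl(1)] part_pos[OF pm kl(2)] by auto
  show False
  proof (cases "x = (k, l)")
    case True
    then have "x \<noteq> (k', l')" using nc by auto
    then have xe': "x = e'" using x(2) m2 by blast
    have "(k', l') \<in> nu" using part_down[OF pn, of k l k' l'] kl(1) True xe' es' pos by auto
    then have "(k', l') \<in> nu - lam" using kl by blast
    then have "(k', l') = (k, l) \<or> (k', l') = e" using m1 by blast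
    then show False using True xe' es es' nc by auto
  next
    case False
    then have xe: "x = e" using x(1) m1 by blast
    obtain a b where ab: "x = (a, b)" by (cases x)
    have "(k, l) \<in> mu" using part_down[OF pm, of a b k l] x(2) xe ab es pos by auto
    then have "(k, l) \<in> mu - lam" using kl by blast
    then have "(k, l) = (k', l') \<or> (k, l) = e'" using m2 by blast
    moreover have "x = (k', l') \<or> x = e'" using x(2) m2 by blast
    ultimately show False using xe es es' nc False by auto
  qed
qed

lemma local_good:
  assumes pl: "part lam" and pm: "part mu" and pn: "part nu"
    and sm: "dstep lam mu" and sn: "dstep lam nu"
    and mr: "m = 1 \<or> m = -1 \<or> m = 0" and mz: "m \<noteq> 0 \<Longrightarrow> mu = lam \<and> nu = lam"
  shows "good m lam mu nu (local_rule m lam mu nu)"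
proof -
  have s1: "lam \<subseteq> mu" "lam \<subseteq> nu" using sm sn unfolding dstep_def by auto
  consider "m = 1" | "m = -1" | "m = 0" using mr by blast
  then show ?thesis
  proof cases
    case 1
    then show ?thesis using mz case_p1[OF pl] by simp
  next
    case 2
    then show ?thesis using mz case_m1[OF pl] by simp
  next
    case 3
    show ?thesis
    proof (cases "lam = mu")
      case True
      then show ?thesis using case_eq1[OF pn sn] 3 by simp
    next
      case ne1: False
      show ?thesis
      proof (cases "lam = nu")
        case True
        then show ?thesis using case_eq2[OF pm sm ne1] 3 by simp
      next
        case ne2: False
        obtain k l where G0: "nu - lam = {(k, l), (Suc k, l)} \<or> nu - lam = {(k, l), (k, Suc l)}"
          using dom_cases[OF sn] ne2 by metis
        obtain k' l' where G0': "mu - lam = {(k', l'), (Suc k', l')} \<or> mu - lam = {(k', l'), (k', Suc l')}"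
          using dom_cases[OF sm] ne1 by metis
        obtain e where G: "nu - lam = {(k, l), e}" and es: "e = (Suc k, l) \<or> e = (k, Suc l)"
          using G0 by blast
        obtain e' where G': "mu - lam = {(k', l'), e'}" and es': "e' = (Suc k', l') \<or> e' = (k', Suc l')"
          using G0' by blast
        show ?thesis
        proof (cases "(nu - lam) \<inter> (mu - lam) = {}")
          case True
          then show ?thesis using case_disj[OF pm pn sm sn ne1 ne2] 3 by simp
        next
          case False
          have ic: "nu - lam = mu - lam \<or> (k' = k \<and> l' = l)"
            by (rule inter_cases[OF pm pn G es G' es' False])
          show ?thesis
          proof (cases "nu - lam = mu - lam")
            case True
            from es show ?thesis
            proof
              assume "e = (Suc k, l)"
              then show ?thesis using case_vert[OF pl pm s1, of k l] G True 3 by simp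
            next
              assume "e = (k, Suc l)"
              then show ?thesis using case_horiz[OF pl pm s1, of k l] G True 3 by simp
            qed
          next
            case neq: False
            then have kk: "k' = k" "l' = l" using ic by auto
            from es es' show ?thesis
            proof (elim disjE)
              assume "e = (Suc k, l)" "e' = (Suc k', l')"
              then show ?thesis using neq G G' kk by simp
            next
              assume "e = (Suc k, l)" "e' = (k', Suc l')"
              then show ?thesis using case_vh[OF pl pm pn s1, of k l] G G' kk 3 by simp
            next
              assume "e = (k, Suc l)" "e' = (Suc k', l')"
              then show ?thesis using case_hv[OF pl pm pn s1, of k l] G G' kk 3 by simp
            next
              assume "e = (k, Suc l)" "e' = (k', Suc l')"
              then show ?thesis using neq G G' kk by simp
            qed
          qed
        qed
      qed
    qed
  qed
qed



definition inner :: "diagram \<Rightarrow> diagram \<Rightarrow> diagram \<Rightarrow> diagram" where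
  "inner lam g g' =
      (if g \<inter> g' = {} then lam \<union> g \<union> g'
       else if (\<exists>c. g \<inter> g' = {c})
         then (let (k, l) = (THE c. g \<inter> g' = {c}) in lam \<union> g \<union> g' \<union> {(Suc k, Suc l)})
       else if g = g' \<and> vertical_domino g
         then (let l = (THE l. vertical_in_col g l); S = lam \<union> g in
               S \<union> {(col_len S (Suc l) + 1, Suc l), (col_len S (Suc l) + 2, Suc l)})
       else if g = g' \<and> horizontal_domino g
         then (let k = (THE k. horizontal_in_row g k); S = lam \<union> g in
               S \<union> {(Suc k, row_len S (Suc k) + 1), (Suc k, row_len S (Suc k) + 2)})
       else undefined)"

lemma lr_inner: "local_rule m lam mu nu =
    (if m = 1 then lam \<union> {(1, row_len lam 1 + 1), (1, row_len lam 1 + 2)}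
     else if m = -1 then lam \<union> {(col_len lam 1 + 1, 1), (col_len lam 1 + 2, 1)}
     else if lam = mu \<or> lam = nu then (if lam = mu then nu else mu)
     else inner lam (nu - lam) (mu - lam))"
  unfolding local_rule_def inner_def Let_def by (rule refl)

lemma inner_sym: "inner lam g g' = inner lam g' g"
proof (cases "g = g'")
  case True
  then show ?thesis by simp
next
  case False
  then show ?thesis unfolding inner_def by (simp add: Int_commute Un_commute Un_left_commute)
qed

lemma local_rule_sym: "local_rule m lam mu nu = local_rule m lam nu mu"
  unfolding lr_inner using inner_sym[of lam "nu - lam" "mu - lam"] by auto

lemma grow_rec: "grow r p (Suc a) (Suc b) = (if a = 0 \<or> b = 0 then staircase r else
   local_rule (Mentry p a b) (grow r p a b) (grow r p (Suc a) b) (grow r p a (Suc b)))"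
  by (cases a; cases b) auto

lemma grow_b0: "grow r p 0 b = staircase r" "grow r p a 0 = staircase r"
  "grow r p (Suc 0) b = staircase r" "grow r p a (Suc 0) = staircase r"
  by (cases a; cases b; simp)+

lemma grow_sym:
  assumes ms: "\<And>i j. Mentry p (Suc i) (Suc j) = Mentry p (Suc j) (Suc i)"
  shows "grow r p a b = grow r p b a"
  using ms
proof (induction r p a b rule: grow.induct)
  case (1 r p i j)
  have e: "Mentry p (Suc i) (Suc j) = Mentry p (Suc j) (Suc i)" by (rule 1(4))
  have h1: "grow r p (Suc i) (Suc j) = grow r p (Suc j) (Suc i)" by (rule 1(1)[OF 1(4)])
  have h2: "grow r p (Suc (Suc i)) (Suc j) = grow r p (Suc j) (Suc (Suc i))" by (rule 1(2)[OF 1(4)])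
  have h3: "grow r p (Suc i) (Suc (Suc j)) = grow r p (Suc (Suc j)) (Suc i)" by (rule 1(3)[OF 1(4)])
  show ?case unfolding grow.simps h1 h2 h3 e by (rule local_rule_sym)
qed (simp_all add: grow_b0)

lemma Mentry_range: "Mentry p a b = 1 \<or> Mentry p a b = -1 \<or> Mentry p a b = 0"
  unfolding Mentry_def by auto

definition rowfree :: "(nat \<Rightarrow> int) \<Rightarrow> nat \<Rightarrow> nat \<Rightarrow> bool" where
  "rowfree p a b \<longleftrightarrow> (\<forall>j. 1 \<le> j \<and> j < b \<longrightarrow> Mentry p a j = 0)"
definition colfree :: "(nat \<Rightarrow> int) \<Rightarrow> nat \<Rightarrow> nat \<Rightarrow> bool" where
  "colfree p a b \<longleftrightarrow> (\<forall>i. 1 \<le> i \<and> i < a \<longrightarrow> Mentry p i b = 0)"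

lemma sp_zero: "p \<in> signed_perms n \<Longrightarrow> p i \<noteq> 0 \<Longrightarrow> i \<in> {1..n}"
  unfolding signed_perms_def by blast

lemma sp_inj: "p \<in> signed_perms n \<Longrightarrow> inj_on (\<lambda>i. nat \<bar>p i\<bar>) {1..n}"
  unfolding signed_perms_def bij_betw_def by blast

lemma sp_range: "p \<in> signed_perms n \<Longrightarrow> i \<in> {1..n} \<Longrightarrow> nat \<bar>p i\<bar> \<in> {1..n}"
  unfolding signed_perms_def bij_betw_def by blast

lemma entry_free:
  assumes sp: "p \<in> signed_perms n" and ab: "1 \<le> a" "1 \<le> b" and m: "Mentry p a b \<noteq> 0"
  shows "rowfree p a b \<and> colfree p a b"
proof
  have pa: "p a = int b \<or> p a = - int b" using m unfolding Mentry_def by (auto split: if_splits)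
  show "rowfree p a b" unfolding rowfree_def
  proof (intro allI impI)
    fix j assume j: "1 \<le> j \<and> j < b"
    show "Mentry p a j = 0" using pa j unfolding Mentry_def by auto
  qed
  show "colfree p a b" unfolding colfree_def
  proof (intro allI impI)
    fix i assume i: "1 \<le> i \<and> i < a"
    show "Mentry p i b = 0"
    proof (rule ccontr)
      assume "Mentry p i b \<noteq> 0"
      then have pi: "p i = int b \<or> p i = - int b" unfolding Mentry_def by (auto split: if_splits)
      have "p i \<noteq> 0" "p a \<noteq> 0" using pi pa ab by auto
      then have "i \<in> {1..n}" "a \<in> {1..n}" using sp_zero[OF sp] by auto
      moreover have "nat \<bar>p i\<bar> = nat \<bar>p a\<bar>" using pi pa by auto
      ultimately have "i = a" using sp_inj[OF sp] unfolding inj_on_def by blast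
      then show False using i by simp
    qed
  qed
qed

definition claim :: "nat \<Rightarrow> (nat \<Rightarrow> int) \<Rightarrow> nat \<Rightarrow> nat \<Rightarrow> bool" where
  "claim r p a b \<longleftrightarrow> part (grow r p (Suc a) (Suc b))
     \<and> dstep (grow r p a (Suc b)) (grow r p (Suc a) (Suc b))
     \<and> (rowfree p a (Suc b) \<longrightarrow> grow r p (Suc a) (Suc b) = grow r p a (Suc b))
     \<and> dstep (grow r p (Suc a) b) (grow r p (Suc a) (Suc b))
     \<and> (colfree p (Suc a) b \<longrightarrow> grow r p (Suc a) (Suc b) = grow r p (Suc a) b)"

lemma dstep_refl: "dstep X X" unfolding dstep_def by simp

lemma claim_all:
  assumes sp: "p \<in> signed_perms n"
  shows "claim r p a b"
proof (induction a arbitrary: b)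
  case 0
  show ?case unfolding claim_def by (simp add: grow_b0 part_stair dstep_refl)
next
  case (Suc a)
  note outer = Suc.IH
  show ?case
  proof (induction b)
    case 0
    show ?case unfolding claim_def by (simp add: grow_b0 part_stair dstep_refl)
  next
    case (Suc b)
    let ?m = "Mentry p (Suc a) (Suc b)"
    let ?lam = "grow r p (Suc a) (Suc b)"
    let ?mu = "grow r p (Suc (Suc a)) (Suc b)"
    let ?nu = "grow r p (Suc a) (Suc (Suc b))"
    have rho: "grow r p (Suc (Suc a)) (Suc (Suc b)) = local_rule ?m ?lam ?mu ?nu" by simp
    have c1: "claim r p a b" "claim r p a (Suc b)" using outer by auto
    have c2: "claim r p (Suc a) b" by (rule Suc.IH)
    have pl: "part ?lam" using c1(1) unfolding claim_def by blast
    have pn: "part ?nu" and sn: "dstep ?lam ?nu" and en: "colfree p (Suc a) (Suc b) \<longrightarrow> ?nu = ?lam"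
      using c1(2) unfolding claim_def by blast+
    have pm: "part ?mu" and sm: "dstep ?lam ?mu" and em: "rowfree p (Suc a) (Suc b) \<longrightarrow> ?mu = ?lam"
      using c2 unfolding claim_def by blast+
    have mz: "?m \<noteq> 0 \<Longrightarrow> ?mu = ?lam \<and> ?nu = ?lam"
      using entry_free[OF sp, of "Suc a" "Suc b"] em en by auto
    have gd: "good ?m ?lam ?mu ?nu (local_rule ?m ?lam ?mu ?nu)"
      by (rule local_good[OF pl pm pn sm sn Mentry_range mz])
    have r1: "rowfree p (Suc a) (Suc (Suc b)) \<longrightarrow> local_rule ?m ?lam ?mu ?nu = ?nu"
    proof
      assume rf: "rowfree p (Suc a) (Suc (Suc b))"
      then have "?m = 0" unfolding rowfree_def by auto
      moreover have "rowfree p (Suc a) (Suc b)" using rf unfolding rowfree_def by auto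
      ultimately show "local_rule ?m ?lam ?mu ?nu = ?nu" using em lr_eq1 by simp
    qed
    have r2: "colfree p (Suc (Suc a)) (Suc b) \<longrightarrow> local_rule ?m ?lam ?mu ?nu = ?mu"
    proof
      assume cf: "colfree p (Suc (Suc a)) (Suc b)"
      then have "?m = 0" unfolding colfree_def by auto
      moreover have "colfree p (Suc a) (Suc b)" using cf unfolding colfree_def by auto
      ultimately show "local_rule ?m ?lam ?mu ?nu = ?mu" using en lr_eq2 by simp
    qed
    show ?case unfolding claim_def rho using gd r1 r2 unfolding good_def by blast
  qed
qed

lemma sq_good:
  assumes sp: "p \<in> signed_perms n" and a: "1 \<le> a" and j: "1 \<le> j"
  shows "good (Mentry p a j) (grow r p a j) (grow r p (Suc a) j) (grow r p a (Suc j)) (grow r p (Suc a) (Suc j))"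
proof -
  obtain a0 where a0: "a = Suc a0" using a by (cases a) auto
  obtain j0 where j0: "j = Suc j0" using j by (cases j) auto
  let ?m = "Mentry p a j"
  let ?lam = "grow r p a j"
  let ?mu = "grow r p (Suc a) j"
  let ?nu = "grow r p a (Suc j)"
  have rho: "grow r p (Suc a) (Suc j) = local_rule ?m ?lam ?mu ?nu" using a0 j0 by simp
  have c1: "claim r p a0 j0" "claim r p a0 (Suc j0)" "claim r p (Suc a0) j0" using claim_all[OF sp] by auto
  have pl: "part ?lam" using c1(1) a0 j0 unfolding claim_def by blast
  have pn: "part ?nu" and sn: "dstep ?lam ?nu" and en: "colfree p a j \<longrightarrow> ?nu = ?lam"
    using c1(2) a0 j0 unfolding claim_def by blast+
  have pm: "part ?mu" and sm: "dstep ?lam ?mu" and em: "rowfree p a j \<longrightarrow> ?mu = ?lam"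
    using c1(3) a0 j0 unfolding claim_def by blast+
  have mz: "?m \<noteq> 0 \<Longrightarrow> ?mu = ?lam \<and> ?nu = ?lam"
    using entry_free[OF sp a j] em en by auto
  show ?thesis unfolding rho by (rule local_good[OF pl pm pn sm sn Mentry_range mz])
qed

lemma part_grow: "p \<in> signed_perms n \<Longrightarrow> part (grow r p a b)"
proof -
  assume sp: "p \<in> signed_perms n"
  show ?thesis
  proof (cases "a = 0 \<or> b = 0")
    case True
    then show ?thesis using grow_b0 part_stair by auto
  next
    case False
    then obtain a0 b0 where "a = Suc a0" "b = Suc b0" by (metis not0_implies_Suc)
    then show ?thesis using claim_all[OF sp, of r a0 b0] unfolding claim_def by blast
  qed
qed

definition RowE :: "nat \<Rightarrow> (nat \<Rightarrow> int) \<Rightarrow> nat \<Rightarrow> nat \<Rightarrow> int" where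
  "RowE r p a j = (\<Sum>k\<in>{1..<j}. vE (grow r p a k) (grow r p a (Suc k)))"
definition RowO :: "nat \<Rightarrow> (nat \<Rightarrow> int) \<Rightarrow> nat \<Rightarrow> nat \<Rightarrow> int" where
  "RowO r p a j = (\<Sum>k\<in>{1..<j}. vO (grow r p a k) (grow r p a (Suc k)))"
definition negc :: "(nat \<Rightarrow> int) \<Rightarrow> nat \<Rightarrow> nat \<Rightarrow> int" where
  "negc p a j = (\<Sum>k\<in>{1..<j}. (if Mentry p a k = -1 then 1 else 0))"

lemma row_step:
  assumes sp: "p \<in> signed_perms n" and a: "1 \<le> a"
  shows "1 \<le> j \<Longrightarrow> RowE r p (Suc a) j - RowE r p a j = negc p a j - vO (grow r p a j) (grow r p (Suc a) j)"
proof (induction j)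
  case 0
  then show ?case by simp
next
  case (Suc j)
  show ?case
  proof (cases "j = 0")
    case True
    then show ?thesis unfolding RowE_def negc_def using vv_same by (simp add: grow_b0)
  next
    case False
    then have j: "1 \<le> j" by simp
    have gd: "good (Mentry p a j) (grow r p a j) (grow r p (Suc a) j) (grow r p a (Suc j)) (grow r p (Suc a) (Suc j))"
      by (rule sq_good[OF sp a j])
    have ih: "RowE r p (Suc a) j - RowE r p a j = negc p a j - vO (grow r p a j) (grow r p (Suc a) j)"
      using Suc.IH j by simp
    have e1: "RowE r p (Suc a) (Suc j) = RowE r p (Suc a) j + vE (grow r p (Suc a) j) (grow r p (Suc a) (Suc j))"
      unfolding RowE_def using j by (simp add: sum.atLeastLessThan_Suc)
    have e2: "RowE r p a (Suc j) = RowE r p a j + vE (grow r p a j) (grow r p a (Suc j))"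
      unfolding RowE_def using j by (simp add: sum.atLeastLessThan_Suc)
    have e3: "negc p a (Suc j) = negc p a j + (if Mentry p a j = -1 then 1 else 0)"
      unfolding negc_def using j by (simp add: sum.atLeastLessThan_Suc)
    show ?thesis using gd ih e1 e2 e3 unfolding good_def by simp
  qed
qed

lemma row_total:
  assumes sp: "p \<in> signed_perms n" and j: "1 \<le> j"
  shows "RowE r p (Suc a) j = (\<Sum>i\<in>{1..<Suc a}. negc p i j - vO (grow r p i j) (grow r p (Suc i) j))"
proof (induction a)
  case 0
  then show ?case unfolding RowE_def using vv_same by (simp add: grow_b0)
next
  case (Suc a)
  have "RowE r p (Suc (Suc a)) j = RowE r p (Suc a) j + (negc p (Suc a) j - vO (grow r p (Suc a) j) (grow r p (Suc (Suc a)) j))"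
    using row_step[OF sp, of "Suc a" j r] j by simp
  then show ?case using Suc.IH by (simp add: sum.atLeastLessThan_Suc)
qed

definition Phi :: "diagram \<Rightarrow> int" where
  "Phi X = (\<Sum>c\<in>X. if odd (snd c) then 1 else -1)"

lemma phi_step:
  assumes fY: "finite Y" and ds: "dstep X Y"
  shows "Phi Y - Phi X = 2 * (vO X Y - vE X Y)"
proof -
  have sub: "X \<subseteq> Y" using ds unfolding dstep_def by blast
  have split: "Phi Y = Phi (Y - X) + Phi X"
    unfolding Phi_def by (rule sum.subset_diff[OF sub fY])
  from ds have "Y - X = {} \<or> vertical_domino (Y - X) \<or> horizontal_domino (Y - X)"
    unfolding dstep_def by blast
  then show ?thesis
  proof (elim disjE)
    assume e: "Y - X = {}"
    then show ?thesis using split vv_E[OF e] e unfolding Phi_def by simp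
  next
    assume "vertical_domino (Y - X)"
    then obtain k l where e: "Y - X = {(k, l), (Suc k, l)}" unfolding vertical_domino_def by blast
    have "Phi (Y - X) = 2 * (if odd l then 1 else -1)" unfolding e Phi_def by simp
    then show ?thesis using split vv_V[OF e] by simp
  next
    assume "horizontal_domino (Y - X)"
    then obtain k l where e: "Y - X = {(k, l), (k, Suc l)}" unfolding horizontal_domino_def by blast
    have "Phi (Y - X) = 0" unfolding e Phi_def by simp
    then show ?thesis using split vv_H[OF e] by simp
  qed
qed

lemma step_right: "p \<in> signed_perms n \<Longrightarrow> 1 \<le> a \<Longrightarrow> dstep (grow r p a j) (grow r p a (Suc j))"
proof -
  assume sp: "p \<in> signed_perms n" and a: "1 \<le> a"
  obtain a0 where "a = Suc a0" using a by (cases a) auto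
  then show ?thesis using claim_all[OF sp, of r a0 j] unfolding claim_def by blast
qed

lemma step_down: "p \<in> signed_perms n \<Longrightarrow> 1 \<le> j \<Longrightarrow> dstep (grow r p a j) (grow r p (Suc a) j)"
proof -
  assume sp: "p \<in> signed_perms n" and j: "1 \<le> j"
  obtain j0 where "j = Suc j0" using j by (cases j) auto
  then show ?thesis using claim_all[OF sp, of r a j0] unfolding claim_def by blast
qed

lemma row_phi:
  assumes sp: "p \<in> signed_perms n" and a: "1 \<le> a"
  shows "1 \<le> j \<Longrightarrow> 2 * (RowO r p a j - RowE r p a j) = Phi (grow r p a j) - Phi (grow r p a 1)"
proof (induction j)
  case 0
  then show ?case by simp
next
  case (Suc j)
  show ?case
  proof (cases "j = 0")
    case True
    then show ?thesis unfolding RowE_def RowO_def by simp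
  next
    case False
    then have j: "1 \<le> j" by simp
    have ps: "Phi (grow r p a (Suc j)) - Phi (grow r p a j)
        = 2 * (vO (grow r p a j) (grow r p a (Suc j)) - vE (grow r p a j) (grow r p a (Suc j)))"
      by (rule phi_step[OF part_fin[OF part_grow[OF sp]] step_right[OF sp a]])
    have e1: "RowE r p a (Suc j) = RowE r p a j + vE (grow r p a j) (grow r p a (Suc j))"
      unfolding RowE_def using j by (simp add: sum.atLeastLessThan_Suc)
    have e2: "RowO r p a (Suc j) = RowO r p a j + vO (grow r p a j) (grow r p a (Suc j))"
      unfolding RowO_def using j by (simp add: sum.atLeastLessThan_Suc)
    show ?thesis using Suc.IH j ps e1 e2 by simp
  qed
qed

lemma inv_cases:
  assumes inv: "is_involution n p" and a: "a \<in> {1..n}"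
  obtains "p a = int a" | "p a = - int a" | l where "l \<in> {1..n}" "l \<noteq> a" "p a = int l" "p l = int a"
    | l where "l \<in> {1..n}" "l \<noteq> a" "p a = - int l" "p l = - int a"
  using inv a unfolding is_involution_def by blast

lemma inv_pos:
  assumes sp: "p \<in> signed_perms n" and inv: "is_involution n p" and ab: "1 \<le> a" "1 \<le> b"
  shows "(p a = int b \<longrightarrow> p b = int a) \<and> (p a = - int b \<longrightarrow> p b = - int a)"
proof (intro conjI impI)
  assume h: "p a = int b"
  then have an: "a \<in> {1..n}" using sp_zero[OF sp] ab by auto
  show "p b = int a"
  proof (cases rule: inv_cases[OF inv an])
    case 1 then show ?thesis using h by simp
  next
    case 2 then show ?thesis using h ab by simp
  next
    case (3 l) then show ?thesis using h by simp
  next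
    case (4 l) then show ?thesis using h by simp
  qed
next
  assume h: "p a = - int b"
  then have an: "a \<in> {1..n}" using sp_zero[OF sp] ab by auto
  show "p b = - int a"
  proof (cases rule: inv_cases[OF inv an])
    case 1 then show ?thesis using h ab by simp
  next
    case 2 then show ?thesis using h by simp
  next
    case (3 l) then show ?thesis using h by simp
  next
    case (4 l) then show ?thesis using h by simp
  qed
qed

lemma Msym:
  assumes sp: "p \<in> signed_perms n" and inv: "is_involution n p"
  shows "Mentry p (Suc i) (Suc j) = Mentry p (Suc j) (Suc i)"
proof -
  have s: "1 \<le> Suc i" "1 \<le> Suc j" by simp_all
  have h1: "(p (Suc i) = int (Suc j)) = (p (Suc j) = int (Suc i))"
    using inv_pos[OF sp inv s(1) s(2)] inv_pos[OF sp inv s(2) s(1)] by blast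
  have h2: "(p (Suc i) = - int (Suc j)) = (p (Suc j) = - int (Suc i))"
    using inv_pos[OF sp inv s(1) s(2)] inv_pos[OF sp inv s(2) s(1)] by blast
  show ?thesis unfolding Mentry_def by (simp only: h1 h2)
qed

lemma diag_step:
  assumes sp: "p \<in> signed_perms n" and inv: "is_involution n p" and i: "1 \<le> i"
  shows "Phi (grow r p (Suc i) (Suc i)) - Phi (grow r p i i) = 2 * (if Mentry p i i = -1 then 1 else 0)"
proof -
  have gd: "good (Mentry p i i) (grow r p i i) (grow r p (Suc i) i) (grow r p i (Suc i)) (grow r p (Suc i) (Suc i))"
    by (rule sq_good[OF sp i i])
  have sym: "grow r p i (Suc i) = grow r p (Suc i) i"
    by (rule grow_sym[OF Msym[OF sp inv]])
  have d1: "dstep (grow r p i i) (grow r p (Suc i) i)" by (rule step_down[OF sp i])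
  have d2: "dstep (grow r p (Suc i) i) (grow r p (Suc i) (Suc i))" using gd unfolding good_def by blast
  have p1: "Phi (grow r p (Suc i) i) - Phi (grow r p i i) = 2 * (vO (grow r p i i) (grow r p (Suc i) i) - vE (grow r p i i) (grow r p (Suc i) i))"
    by (rule phi_step[OF part_fin[OF part_grow[OF sp]] d1])
  have p2: "Phi (grow r p (Suc i) (Suc i)) - Phi (grow r p (Suc i) i) = 2 * (vO (grow r p (Suc i) i) (grow r p (Suc i) (Suc i)) - vE (grow r p (Suc i) i) (grow r p (Suc i) (Suc i)))"
    by (rule phi_step[OF part_fin[OF part_grow[OF sp]] d2])
  show ?thesis using gd p1 p2 sym unfolding good_def by simp
qed

lemma diag_total:
  assumes sp: "p \<in> signed_perms n" and inv: "is_involution n p"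
  shows "Phi (grow r p (Suc a) (Suc a)) - Phi (grow r p 1 1) = 2 * (\<Sum>i\<in>{1..<Suc a}. (if Mentry p i i = -1 then 1 else 0))"
proof (induction a)
  case 0
  then show ?case by simp
next
  case (Suc a)
  then show ?case using diag_step[OF sp inv, of "Suc a" r] by (simp add: sum.atLeastLessThan_Suc)
qed



lemma card_ind: "finite A \<Longrightarrow> int (card {x\<in>A. P x}) = (\<Sum>x\<in>A. if P x then 1 else 0)"
  by (simp add: sum.inter_filter[symmetric])

lemma Pd_len: "length (Pd r n p) = Suc n" by (simp add: Pd_def del: upt_Suc)
lemma Pd_nth: "k < Suc n \<Longrightarrow> Pd r n p ! k = grow r p (Suc n) (Suc k)" by (simp add: Pd_def nth_upt del: upt_Suc)

lemma ev_eq: "int (ev (Pd r n p)) = RowE r p (Suc n) (Suc n)"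
proof -
  have "{k. 0 < k \<and> k < length (Pd r n p) \<and> (\<exists>l. even l \<and> vertical_in_col (Pd r n p ! k - Pd r n p ! (k - 1)) l)}
      = {k\<in>{1..<Suc n}. (\<exists>l. even l \<and> vertical_in_col (grow r p (Suc n) (Suc k) - grow r p (Suc n) k) l)}"
    (is "?A = ?B")
  proof
    show "?A \<subseteq> ?B" using Pd_nth Pd_len by (auto simp: Suc_pred)
    show "?B \<subseteq> ?A" using Pd_nth Pd_len by (auto simp: Suc_pred)
  qed
  then have "int (ev (Pd r n p)) = int (card ?B)" unfolding ev_def by simp
  also have "\<dots> = RowE r p (Suc n) (Suc n)" unfolding card_ind[OF finite_atLeastLessThan] RowE_def vE_def by simp
  finally show ?thesis .
qed

lemma ov_eq: "int (ov (Pd r n p)) = RowO r p (Suc n) (Suc n)"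
proof -
  have "{k. 0 < k \<and> k < length (Pd r n p) \<and> (\<exists>l. odd l \<and> vertical_in_col (Pd r n p ! k - Pd r n p ! (k - 1)) l)}
      = {k\<in>{1..<Suc n}. (\<exists>l. odd l \<and> vertical_in_col (grow r p (Suc n) (Suc k) - grow r p (Suc n) k) l)}"
    (is "?A = ?B")
  proof
    show "?A \<subseteq> ?B" using Pd_nth Pd_len by (auto simp: Suc_pred)
    show "?B \<subseteq> ?A" using Pd_nth Pd_len by (auto simp: Suc_pred)
  qed
  then have "int (ov (Pd r n p)) = int (card ?B)" unfolding ov_def by simp
  also have "\<dots> = RowO r p (Suc n) (Suc n)" unfolding card_ind[OF finite_atLeastLessThan] RowO_def vO_def by simp
  finally show ?thesis .
qed

lemma neg_row:
  assumes sp: "p \<in> signed_perms n" and i: "i \<in> {1..n}"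
  shows "(\<Sum>k\<in>{1..<Suc n}. (if Mentry p i k = -1 then 1 else 0 :: int)) = (if p i < 0 then 1 else 0)"
proof -
  have m: "Mentry p i k = -1 \<longleftrightarrow> p i = - int k" if "k \<in> {1..<Suc n}" for k
    using that unfolding Mentry_def by auto
  have "(\<Sum>k\<in>{1..<Suc n}. (if Mentry p i k = -1 then 1 else 0 :: int))
      = (\<Sum>k\<in>{1..<Suc n}. (if p i = - int k then 1 else 0))"
    using m by (intro sum.cong) auto
  also have "\<dots> = (if p i < 0 then 1 else 0)"
  proof (cases "p i < 0")
    case True
    define k0 where "k0 = nat \<bar>p i\<bar>"
    have k0: "k0 \<in> {1..<Suc n}" using sp_range[OF sp i] k0_def by auto
    have "(p i = - int k) \<longleftrightarrow> (k0 = k)" for k using True k0_def by auto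
    then have "(\<Sum>k\<in>{1..<Suc n}. (if p i = - int k then 1 else 0 :: int)) = (\<Sum>k\<in>{1..<Suc n}. (if k0 = k then 1 else 0))"
      by simp
    also have "\<dots> = 1" using k0 by simp
    finally show ?thesis using True by simp
  next
    case False
    then have "p i \<noteq> - int k" if "k \<in> {1..<Suc n}" for k using that by auto
    then show ?thesis using False by simp
  qed
  finally show ?thesis .
qed

lemma neg_count:
  assumes sp: "p \<in> signed_perms n" and inv: "is_involution n p"
  shows "card {i\<in>{1..n}. p i < 0} = barred_fixed_points n p + 2 * barred_two_cycles n p"
proof -
  define F where "F = {k\<in>{1..n}. p k = - int k}"
  define T where "T = {k\<in>{1..n}. p k < 0 \<and> p k \<noteq> - int k}"
  define P where "P = {{k, l} | k l. k \<in> {1..n} \<and> l \<in> {1..n} \<and> k \<noteq> l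
      \<and> p k = - int l \<and> p l = - int k}"
  have split: "{i\<in>{1..n}. p i < 0} = F \<union> T" unfolding F_def T_def by auto
  have disj: "F \<inter> T = {}" unfolding F_def T_def by auto
  have cF: "card F = barred_fixed_points n p" unfolding F_def barred_fixed_points_def by simp
  have cP: "card P = barred_two_cycles n p" unfolding P_def barred_two_cycles_def by simp
  have form: "A = {y, nat (- p y)}" if A: "A \<in> P" and y: "y \<in> A" for A y
  proof -
    obtain k l where A': "A = {k, l}" "p k = - int l" "p l = - int k" using A unfolding P_def by blast
    show ?thesis using y A' by (auto simp: insert_commute)
  qed
  have TU: "T = \<Union>P"
  proof
    show "T \<subseteq> \<Union>P"
    proof
      fix k assume k: "k \<in> T"
      then have kn: "k \<in> {1..n}" "p k < 0" "p k \<noteq> - int k" unfolding T_def by auto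
      show "k \<in> \<Union>P"
      proof (cases rule: inv_cases[OF inv kn(1)])
        case 1 then show ?thesis using kn by simp
      next
        case 2 then show ?thesis using kn by simp
      next
        case (3 l) then show ?thesis using kn by simp
      next
        case (4 l)
        then have "{k, l} \<in> P" unfolding P_def using kn by blast
        then show ?thesis by blast
      qed
    qed
    show "\<Union>P \<subseteq> T"
    proof
      fix x assume "x \<in> \<Union>P"
      then obtain k l where kl: "x \<in> {k, l}" "k \<in> {1..n}" "l \<in> {1..n}" "k \<noteq> l" "p k = - int l" "p l = - int k"
        unfolding P_def by blast
      then show "x \<in> T" unfolding T_def by auto
    qed
  qed
  have finP: "finite P"
  proof -
    have "P \<subseteq> Pow {1..n}" unfolding P_def by auto
    then show ?thesis by (rule finite_subset) simp
  qed
  have card2: "card A = 2" if "A \<in> P" for A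
    using that unfolding P_def by auto
  have pw: "pairwise disjnt P"
    unfolding pairwise_def disjnt_def
  proof (intro ballI impI)
    fix A B assume AB: "A \<in> P" "B \<in> P" "A \<noteq> B"
    show "A \<inter> B = {}"
    proof (rule ccontr)
      assume "A \<inter> B \<noteq> {}"
      then obtain y where "y \<in> A" "y \<in> B" by blast
      then have "A = B" using form[OF AB(1)] form[OF AB(2)] by metis
      then show False using AB by simp
    qed
  qed
  have finA: "finite A" if "A \<in> P" for A using that unfolding P_def by auto
  have "card T = sum card P" unfolding TU by (rule card_Union_disjoint[OF pw finA])
  also have "\<dots> = 2 * card P" using card2 by simp
  finally have cT: "card T = 2 * card P" .
  have finFT: "finite F" "finite T" unfolding F_def T_def by auto
  show ?thesis unfolding split using card_Un_disjoint[OF finFT disj] cF cT cP by simp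
qed


theorem corollary3p11:
  fixes r n :: nat and p :: "nat \<Rightarrow> int"
  assumes "p \<in> signed_perms n"
    and "is_involution n p"
  shows "ev (Pd r n p) = barred_two_cycles n p
       \<and> ov (Pd r n p) = barred_fixed_points n p + barred_two_cycles n p"
proof -
  note sp = assms(1) and inv = assms(2)
  let ?N = "Suc n"
  let ?E = "RowE r p ?N ?N"
  let ?O = "RowO r p ?N ?N"
  have rt: "?E = (\<Sum>i\<in>{1..<Suc n}. negc p i ?N - vO (grow r p i ?N) (grow r p (Suc i) ?N))"
    by (rule row_total[OF sp]) simp
  have s1: "(\<Sum>i\<in>{1..<Suc n}. vO (grow r p i ?N) (grow r p (Suc i) ?N)) = ?O"
  proof -
    have "(\<Sum>i\<in>{1..<Suc n}. vO (grow r p i ?N) (grow r p (Suc i) ?N))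
        = (\<Sum>i\<in>{1..<Suc n}. vO (grow r p ?N i) (grow r p ?N (Suc i)))"
      using grow_sym[OF Msym[OF sp inv]] by metis
    then show ?thesis unfolding RowO_def by simp
  qed
  have s2: "(\<Sum>i\<in>{1..<Suc n}. negc p i ?N) = int (card {i\<in>{1..n}. p i < 0})"
  proof -
    have "(\<Sum>i\<in>{1..<Suc n}. negc p i ?N) = (\<Sum>i\<in>{1..n}. (if p i < 0 then 1 else 0))"
      unfolding negc_def using neg_row[OF sp] by (intro sum.cong) auto
    then show ?thesis using card_ind[of "{1..n}" "\<lambda>i. p i < 0"] by simp
  qed
  have EO: "?E + ?O = int (barred_fixed_points n p) + 2 * int (barred_two_cycles n p)"
    using rt s1 s2 neg_count[OF sp inv] by (simp add: sum_subtractf)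
  have rp: "2 * (?O - ?E) = Phi (grow r p ?N ?N) - Phi (grow r p ?N 1)"
    by (rule row_phi[OF sp]) simp_all
  have dt: "Phi (grow r p ?N ?N) - Phi (grow r p 1 1) = 2 * (\<Sum>i\<in>{1..<Suc n}. (if Mentry p i i = -1 then 1 else 0))"
    by (rule diag_total[OF sp inv])
  have g1: "grow r p ?N 1 = grow r p 1 1" by (simp add: grow_b0)
  have s3: "(\<Sum>i\<in>{1..<Suc n}. (if Mentry p i i = -1 then 1 else 0)) = int (barred_fixed_points n p)"
  proof -
    have "(\<Sum>i\<in>{1..<Suc n}. (if Mentry p i i = -1 then 1 else 0 :: int))
        = (\<Sum>i\<in>{1..n}. (if p i = - int i then 1 else 0))"
      unfolding Mentry_def by (intro sum.cong) auto
    then show ?thesis unfolding barred_fixed_points_def using card_ind[of "{1..n}" "\<lambda>i. p i = - int i"] by simp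
  qed
  have OE: "?O - ?E = int (barred_fixed_points n p)" using rp dt g1 s3 by simp
  have "int (ev (Pd r n p)) = int (barred_two_cycles n p)" using ev_eq EO OE by simp
  moreover have "int (ov (Pd r n p)) = int (barred_fixed_points n p) + int (barred_two_cycles n p)"
    using ov_eq EO OE by simp
  ultimately show ?thesis by simp
qed

end
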